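(* Let $\vec\sigma$ be any preference profile over $m$ alternatives with $n$ agents, and $d$ any pseudometric consistent with $\vec\sigma$. Let $\tau<1/m$ and let $\mathcal A'\subseteq\mathcal A$ be the set of alternatives with plurality score at least $\tau n$. Then $$\frac{\min_{X\in\mathcal A'}\mathrm{SC}(X,d)}{\min_{X\in\mathcal A}\mathrm{SC}(X,d)}\le 1+\frac{2}{1-\tau m}.$$ Consequently, if $f$ is a deterministic voting rule with metric distortion at most $D$, then the alternative $f(\vec\sigma')$, where $\vec\sigma'$ is $\vec\sigma$ restricted to $\mathcal A'$, satisfies $\mathrm{SC}(f(\vec\sigma'),d)\le D\left(1+\frac{2}{1-\tau m}\right)\min_{X\in\mathcal A}\mathrm{SC}(X,d)$.
   Context: Setting: $\mathcal N$ is a set of $n$ agents and $\mathcal A$ a set of $m$ alternatives. Each agent $i$ has a strict ranking $\sigma_i$ of $\mathcal A$; $X\succ_i Y$ means $i$ ranks $X$ above $Y$. The plurality score of $X$ is the number of agents ranking $X$ first. Restricting $\vec\sigma$ to $\mathcal A'$ means each agent's ranking is restricted to $\mathcal A'$ (relative order preserved). Metric framework: $d:(\mathcal N\cup\mathcal A)^2\to\mathbb R_{\ge0}$ is a pseudometric ($d(a,a)=0$, symmetric, triangle inequality). $d$ is consistent with $\vec\sigma$ if $X\succ_i Y\Rightarrow d(i,X)\le d(i,Y)$ for all $i,X,Y$. $\mathrm{SC}(X,d)=\sum_{i\in\mathcal N}d(i,X)$. The metric distortion of a distribution $p$ on $d$ is $\mathbb E_{X\sim p}[\mathrm{SC}(X,d)]/\min_X\mathrm{SC}(X,d)$;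 the metric distortion of a rule $f$ is the supremum of this quantity for $p=f(\vec\sigma)$ over all profiles $\vec\sigma$ (any $n$, any alternative set) and all pseudometrics $d$ consistent with $\vec\sigma$. *)

theory Defs
  imports Complex_Main
begin

text \<open>A profile over agents N and alternatives A: each agent i in N has a strict
ranking of A, given as a list (best first) that enumerates A without repetition.\<close>
definition valid_profile :: "'n set \<Rightarrow> 'a set \<Rightarrow> ('n \<Rightarrow> 'a list) \<Rightarrow> bool" where
  "valid_profile N A \<sigma> \<longleftrightarrow> finite N \<and> N \<noteq> {} \<and> finite A \<and> A \<noteq> {} \<and>
     (\<forall>i\<in>N. distinct (\<sigma> i) \<and> set (\<sigma> i) = A)"

definition prefers :: "('n \<Rightarrow> 'a list) \<Rightarrow> 'n \<Rightarrow> 'a \<Rightarrow> 'a \<Rightarrow> bool" where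
  "prefers \<sigma> i X Y \<longleftrightarrow> (\<exists>k l. k < l \<and> l < length (\<sigma> i) \<and> \<sigma> i ! k = X \<and> \<sigma> i ! l = Y)"

definition plurality_score :: "'n set \<Rightarrow> ('n \<Rightarrow> 'a list) \<Rightarrow> 'a \<Rightarrow> nat" where
  "plurality_score N \<sigma> X = card {i\<in>N. \<sigma> i \<noteq> [] \<and> hd (\<sigma> i) = X}"

definition restrict_profile :: "('n \<Rightarrow> 'a list) \<Rightarrow> 'a set \<Rightarrow> 'n \<Rightarrow> 'a list" where
  "restrict_profile \<sigma> A' = (\<lambda>i. filter (\<lambda>x. x \<in> A') (\<sigma> i))"

text \<open>Points of the metric space are agents (Inl) and alternatives (Inr).\<close>
definition pseudometric_on :: "('n + 'a) set \<Rightarrow> (('n + 'a) \<Rightarrow> ('n + 'a) \<Rightarrow> real) \<Rightarrow> bool" where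
  "pseudometric_on S d \<longleftrightarrow>
     (\<forall>x\<in>S. \<forall>y\<in>S. 0 \<le> d x y) \<and> (\<forall>x\<in>S. d x x = 0) \<and>
     (\<forall>x\<in>S. \<forall>y\<in>S. d x y = d y x) \<and>
     (\<forall>x\<in>S. \<forall>y\<in>S. \<forall>z\<in>S. d x z \<le> d x y + d y z)"

definition consistent :: "'n set \<Rightarrow> 'a set \<Rightarrow> ('n \<Rightarrow> 'a list) \<Rightarrow> (('n + 'a) \<Rightarrow> ('n + 'a) \<Rightarrow> real) \<Rightarrow> bool" where
  "consistent N A \<sigma> d \<longleftrightarrow>
     pseudometric_on (Inl ` N \<union> Inr ` A) d \<and>
     (\<forall>i\<in>N. \<forall>X\<in>A. \<forall>Y\<in>A. prefers \<sigma> i X Y \<longrightarrow> d (Inl i) (Inr X) \<le> d (Inl i) (Inr Y))"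

definition SC :: "'n set \<Rightarrow> (('n + 'a) \<Rightarrow> ('n + 'a) \<Rightarrow> real) \<Rightarrow> 'a \<Rightarrow> real" where
  "SC N d X = (\<Sum>i\<in>N. d (Inl i) (Inr X))"

text \<open>Its metric distortion is at most D iff for every profile and every
consistent pseudometric, SC(f(profile)) \<le> D * min SC (the ratio form, cleared of denominators).\<close>
definition deterministic_rule :: "('n set \<Rightarrow> 'a set \<Rightarrow> ('n \<Rightarrow> 'a list) \<Rightarrow> 'a) \<Rightarrow> bool" where
  "deterministic_rule f \<longleftrightarrow> (\<forall>N A \<sigma>. valid_profile N A \<sigma> \<longrightarrow> f N A \<sigma> \<in> A)"

definition distortion_at_most ::
  "('n set \<Rightarrow> 'a set \<Rightarrow> ('n \<Rightarrow> 'a list) \<Rightarrow> 'a) \<Rightarrow> real \<Rightarrow> bool" where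
  "distortion_at_most f D \<longleftrightarrow>
     (\<forall>N A \<sigma> d. valid_profile N A \<sigma> \<longrightarrow> consistent N A \<sigma> d \<longrightarrow>
        SC N d (f N A \<sigma>) \<le> D * Min (SC N d ` A))"

end

theory Submission
  imports Defs
begin

definition pr :: "'a list \<Rightarrow> 'a \<Rightarrow> 'a \<Rightarrow> bool" where
  "pr xs X Y \<longleftrightarrow> (\<exists>k l. k < l \<and> l < length xs \<and> xs ! k = X \<and> xs ! l = Y)"

lemma pr_Nil: "\<not> pr [] X Y" by (auto simp: pr_def)

lemma pr_Cons: "pr (x#xs) X Y \<longleftrightarrow> (x = X \<and> Y \<in> set xs) \<or> pr xs X Y"
proof
  assume "pr (x#xs) X Y"
  then obtain k l where kl: "k < l" "l < length (x#xs)" "(x#xs) ! k = X" "(x#xs) ! l = Y"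
    unfolding pr_def by blast
  show "(x = X \<and> Y \<in> set xs) \<or> pr xs X Y"
  proof (cases k)
    case 0
    then obtain l' where "l = Suc l'" using kl by (cases l) auto
    then show ?thesis using kl 0 by auto
  next
    case (Suc k')
    then obtain l' where "l = Suc l'" using kl by (cases l) auto
    then show ?thesis using kl Suc unfolding pr_def by auto
  qed
next
  assume "(x = X \<and> Y \<in> set xs) \<or> pr xs X Y"
  then show "pr (x#xs) X Y"
  proof
    assume h: "x = X \<and> Y \<in> set xs"
    then obtain j where "j < length xs" "xs ! j = Y" by (auto simp: in_set_conv_nth)
    then show ?thesis using h unfolding pr_def
      by (intro exI[of _ 0] exI[of _ "Suc j"]) auto
  next
    assume "pr xs X Y"
    then obtain k l where "k < l" "l < length xs" "xs ! k = X" "xs ! l = Y"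
      unfolding pr_def by blast
    then show ?thesis unfolding pr_def
      by (intro exI[of _ "Suc k"] exI[of _ "Suc l"]) auto
  qed
qed

lemma pr_filter: "pr (filter P xs) X Y \<Longrightarrow> pr xs X Y"
  by (induction xs) (auto simp: pr_Cons pr_Nil split: if_splits)

lemma prefers_pr: "prefers \<sigma> i X Y = pr (\<sigma> i) X Y"
  by (simp add: prefers_def pr_def)

lemma pm_mono: "pseudometric_on S d \<Longrightarrow> T \<subseteq> S \<Longrightarrow> pseudometric_on T d"
  unfolding pseudometric_on_def by (simp add: subset_iff)

lemma D_nonneg:
  fixes f :: "'n set \<Rightarrow> 'a set \<Rightarrow> ('n \<Rightarrow> 'a list) \<Rightarrow> 'a"
  assumes "deterministic_rule f" "distortion_at_most f D"
  shows "D \<ge> 0"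
proof -
  fix i :: 'n and a :: 'a
  define d0 :: "('n + 'a) \<Rightarrow> ('n + 'a) \<Rightarrow> real" where "d0 = (\<lambda>x y. if x = y then 0 else 1)"
  have vp: "valid_profile {i} {a} (\<lambda>_. [a])" by (simp add: valid_profile_def)
  have co: "consistent {i} {a} (\<lambda>_. [a]) d0"
    unfolding consistent_def pseudometric_on_def d0_def prefers_def by auto
  have "f {i} {a} (\<lambda>_. [a]) \<in> {a}" using assms(1) vp unfolding deterministic_rule_def by blast
  hence fa: "f {i} {a} (\<lambda>_. [a]) = a" by simp
  have "SC {i} d0 (f {i} {a} (\<lambda>_. [a])) \<le> D * Min (SC {i} d0 ` {a})"
    using assms(2) vp co unfolding distortion_at_most_def by blast
  then show ?thesis using fa by (simp add: SC_def d0_def)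
qed

theorem mainTheorem2:
  fixes N :: "'n set" and A :: "'a set" and \<sigma> :: "'n \<Rightarrow> 'a list"
    and d :: "('n + 'a) \<Rightarrow> ('n + 'a) \<Rightarrow> real" and \<tau> :: real
    and f :: "'n set \<Rightarrow> 'a set \<Rightarrow> ('n \<Rightarrow> 'a list) \<Rightarrow> 'a" and D :: real
  assumes prof: "valid_profile N A \<sigma>"
    and cons: "consistent N A \<sigma> d"
    and tau: "\<tau> < 1 / real (card A)"
  defines "A' \<equiv> {X \<in> A. \<tau> * real (card N) \<le> real (plurality_score N \<sigma> X)}"
  shows "Min (SC N d ` A') \<le> (1 + 2 / (1 - \<tau> * real (card A))) * Min (SC N d ` A)
    \<and> (deterministic_rule f \<and> distortion_at_most f D \<longrightarrow>
         SC N d (f N A' (restrict_profile \<sigma> A'))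
           \<le> D * (1 + 2 / (1 - \<tau> * real (card A))) * Min (SC N d ` A))"
proof -
  have finN: "finite N" and Nne: "N \<noteq> {}" and finA: "finite A" and Ane: "A \<noteq> {}"
    and dist: "\<And>i. i \<in> N \<Longrightarrow> distinct (\<sigma> i)" and setA: "\<And>i. i \<in> N \<Longrightarrow> set (\<sigma> i) = A"
    using prof unfolding valid_profile_def by auto
  define m where "m = real (card A)"
  define n where "n = real (card N)"
  have mpos: "m > 0" using finA Ane unfolding m_def by (simp add: card_gt_0_iff)
  have npos: "n > 0" using finN Nne unfolding n_def by (simp add: card_gt_0_iff)
  have tm: "\<tau> * m < 1" using tau mpos unfolding m_def[symmetric] by (simp add: field_simps)
  define c where "c = 1 - \<tau> * m"
  have cpos: "c > 0" using tm unfolding c_def by simp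
  define top where "top = (\<lambda>i. hd (\<sigma> i))"
  have ne: "\<And>i. i \<in> N \<Longrightarrow> \<sigma> i \<noteq> []" using setA Ane by fastforce
  have topA: "\<And>i. i \<in> N \<Longrightarrow> top i \<in> A" using setA ne unfolding top_def
    by (metis hd_in_set)
  have pm: "pseudometric_on (Inl ` N \<union> Inr ` A) d" using cons unfolding consistent_def by blast
  define PS where "PS = Inl ` N \<union> Inr ` A"
  have pm1: "\<forall>x\<in>PS. \<forall>y\<in>PS. 0 \<le> d x y" and pm3: "\<forall>x\<in>PS. \<forall>y\<in>PS. d x y = d y x"
    and pm4: "\<forall>x\<in>PS. \<forall>y\<in>PS. \<forall>z\<in>PS. d x z \<le> d x y + d y z"
    using pm unfolding pseudometric_on_def PS_def by simp_all
  have dnn: "0 \<le> d (Inl i) (Inr X)" if "i \<in> N" "X \<in> A" for i X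
    by (rule pm1[rule_format]) (use that in \<open>auto simp: PS_def\<close>)
  have dsym: "d (Inr X) (Inl i) = d (Inl i) (Inr X)" if "i \<in> N" "X \<in> A" for i X
    by (rule pm3[rule_format]) (use that in \<open>auto simp: PS_def\<close>)
  have dtri: "\<And>x y z. x \<in> Inl ` N \<union> Inr ` A \<Longrightarrow> y \<in> Inl ` N \<union> Inr ` A \<Longrightarrow>
       z \<in> Inl ` N \<union> Inr ` A \<Longrightarrow> d x z \<le> d x y + d y z"
    using pm4 unfolding PS_def by (metis (no_types))
  have topbest: "d (Inl i) (Inr (top i)) \<le> d (Inl i) (Inr X)" if "i \<in> N" "X \<in> A" for i X
  proof (cases "X = top i")
    case True then show ?thesis by simp
  next
    case False
    have "X \<in> set (\<sigma> i)" using setA that by auto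
    then obtain j where j: "j < length (\<sigma> i)" "\<sigma> i ! j = X" by (auto simp: in_set_conv_nth)
    have jz: "j \<noteq> 0"
    proof
      assume "j = 0"
      then show False using False j ne[OF that(1)] unfolding top_def by (simp add: hd_conv_nth)
    qed
    hence "prefers \<sigma> i (top i) X" unfolding prefers_def top_def using j jz ne[OF that(1)]
      by (intro exI[of _ 0] exI[of _ j]) (auto simp: hd_conv_nth)
    then show ?thesis using cons that topA unfolding consistent_def by blast
  qed
  have plur: "plurality_score N \<sigma> X = card {i\<in>N. top i = X}" for X
    unfolding plurality_score_def top_def using ne by (metis (lifting))
  have SCnn: "\<And>X. X \<in> A \<Longrightarrow> 0 \<le> SC N d X" unfolding SC_def using dnn by (simp add: sum_nonneg)
  have A'sub: "A' \<subseteq> A" unfolding A'_def by auto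
  obtain Oa where Oa: "Oa \<in> A" "SC N d Oa = Min (SC N d ` A)"
    using finA Ane by (metis (no_types, lifting) Min_in finite_imageI image_iff image_is_empty)
  define OPT where "OPT = SC N d Oa"
  have OPTnn: "OPT \<ge> 0" unfolding OPT_def using SCnn Oa(1) by blast
  have bound_ge1: "1 \<le> 1 + 2 / c" using cpos by simp
  have part1: "A' \<noteq> {} \<and> Min (SC N d ` A') \<le> (1 + 2 / c) * OPT"
  proof (cases "\<tau> \<le> 0")
    case True
    have "A' = A" unfolding A'_def using True
      by (auto intro: order_trans[OF mult_nonpos_nonneg[OF True]])
    then show ?thesis using Ane Oa OPTnn bound_ge1 unfolding OPT_def
      by (simp add: mult_le_cancel_right1)
  next
    case False
    hence tpos: "\<tau> > 0" by simp
    define S where "S = {i\<in>N. top i \<in> A'}"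
    have finS: "finite S" using finN unfolding S_def by simp
    have sumN: "(\<Sum>X\<in>A. real (plurality_score N \<sigma> X)) = n"
    proof -
      have "(\<Sum>X\<in>A. (\<Sum>i\<in>{i\<in>N. top i = X}. (1::real))) = (\<Sum>i\<in>N. 1)"
        by (rule sum.group) (use finN finA topA in auto)
      then show ?thesis unfolding n_def plur by simp
    qed
    have sumS: "(\<Sum>X\<in>A'. real (plurality_score N \<sigma> X)) = real (card S)"
    proof -
      have "(\<Sum>X\<in>A'. (\<Sum>i\<in>{i\<in>S. top i = X}. (1::real))) = (\<Sum>i\<in>S. 1)"
        by (rule sum.group) (use finS finA A'sub in \<open>auto simp: S_def intro: finite_subset\<close>)
      moreover have "\<And>X. X \<in> A' \<Longrightarrow> {i\<in>S. top i = X} = {i\<in>N. top i = X}"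
        unfolding S_def by auto
      ultimately show ?thesis unfolding plur by simp
    qed
    have sumB: "(\<Sum>X\<in>A-A'. real (plurality_score N \<sigma> X)) \<le> \<tau> * n * m"
    proof -
      have "(\<Sum>X\<in>A-A'. real (plurality_score N \<sigma> X)) \<le> (\<Sum>X\<in>A-A'. \<tau> * n)"
        by (rule sum_mono) (auto simp: A'_def n_def)
      also have "\<dots> = real (card (A - A')) * (\<tau> * n)" by simp
      also have "\<dots> \<le> m * (\<tau> * n)"
        unfolding m_def using tpos npos finA
        by (intro mult_right_mono) (auto intro: card_mono)
      finally show ?thesis by (simp add: algebra_simps)
    qed
    have "n = (\<Sum>X\<in>A'. real (plurality_score N \<sigma> X)) + (\<Sum>X\<in>A-A'. real (plurality_score N \<sigma> X))"
      using sumN sum.subset_diff[OF A'sub finA, of "\<lambda>X. real (plurality_score N \<sigma> X)"] by simp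
    hence cardS: "real (card S) \<ge> n * c" using sumS sumB unfolding c_def by (simp add: algebra_simps)
    have Spos: "real (card S) > 0" using cardS npos cpos by (smt (verit) mult_pos_pos)
    hence Sne: "S \<noteq> {}" by auto
    obtain i0 where i0: "i0 \<in> S" "\<And>j. j \<in> S \<Longrightarrow> d (Inl i0) (Inr Oa) \<le> d (Inl j) (Inr Oa)"
    proof -
      obtain i0 where "i0 \<in> S" "d (Inl i0) (Inr Oa) = Min ((\<lambda>j. d (Inl j) (Inr Oa)) ` S)"
        using finS Sne by (metis (no_types, lifting) Min_in finite_imageI image_iff image_is_empty)
      then show ?thesis using that finS by auto
    qed
    have i0N: "i0 \<in> N" using i0 unfolding S_def by auto
    define r where "r = d (Inl i0) (Inr Oa)"
    have rnn: "r \<ge> 0" unfolding r_def using dnn i0N Oa by simp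
    have "real (card S) * r = (\<Sum>j\<in>S. r)" by simp
    also have "\<dots> \<le> (\<Sum>j\<in>S. d (Inl j) (Inr Oa))" unfolding r_def by (rule sum_mono) (use i0 in auto)
    also have "\<dots> \<le> (\<Sum>j\<in>N. d (Inl j) (Inr Oa))"
      by (rule sum_mono2) (use finN dnn Oa in \<open>auto simp: S_def\<close>)
    finally have Sr: "real (card S) * r \<le> OPT" unfolding OPT_def SC_def .
    have nr: "n * r \<le> OPT / c"
    proof -
      have "n * c * r \<le> real (card S) * r" using cardS rnn by (simp add: mult_right_mono)
      hence "n * r * c \<le> OPT" using Sr by (simp add: algebra_simps)
      thus ?thesis using cpos by (simp add: field_simps)
    qed
    define X where "X = top i0"
    have XA': "X \<in> A'" using i0 unfolding S_def X_def by auto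
    have XA: "X \<in> A" using XA' A'sub by auto
    have "SC N d X = (\<Sum>j\<in>N. d (Inl j) (Inr X))" unfolding SC_def by simp
    also have "\<dots> \<le> (\<Sum>j\<in>N. d (Inl j) (Inr Oa) + 2 * r)"
    proof (rule sum_mono)
      fix j assume j: "j \<in> N"
      have "d (Inl j) (Inr X) \<le> d (Inl j) (Inr Oa) + d (Inr Oa) (Inr X)"
        by (rule dtri) (use j Oa XA in auto)
      also have "d (Inr Oa) (Inr X) \<le> d (Inr Oa) (Inl i0) + d (Inl i0) (Inr X)"
        by (rule dtri) (use i0N Oa XA in auto)
      also have "d (Inr Oa) (Inl i0) = r" unfolding r_def using dsym i0N Oa by simp
      also have "d (Inl i0) (Inr X) \<le> r" unfolding r_def X_def using topbest i0N Oa by simp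
      finally show "d (Inl j) (Inr X) \<le> d (Inl j) (Inr Oa) + 2 * r" by simp
    qed
    also have "\<dots> = OPT + 2 * (n * r)" unfolding OPT_def SC_def n_def
      by (simp add: sum.distrib algebra_simps)
    also have "\<dots> \<le> OPT + 2 * (OPT / c)" using nr by simp
    also have "\<dots> = (1 + 2 / c) * OPT" by (simp add: algebra_simps)
    finally have "SC N d X \<le> (1 + 2 / c) * OPT" .
    moreover have "Min (SC N d ` A') \<le> SC N d X"
      using XA' finA A'sub by (intro Min_le) (auto intro: finite_subset)
    ultimately show ?thesis using XA' by auto
  qed
  have cdef: "c = 1 - \<tau> * real (card A)" unfolding c_def m_def by simp
  have P1: "Min (SC N d ` A') \<le> (1 + 2 / (1 - \<tau> * real (card A))) * Min (SC N d ` A)"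
    using part1 Oa unfolding OPT_def cdef by simp
  show ?thesis
  proof (intro conjI impI)
    show "Min (SC N d ` A') \<le> (1 + 2 / (1 - \<tau> * real (card A))) * Min (SC N d ` A)" by (rule P1)
  next
    assume fD: "deterministic_rule f \<and> distortion_at_most f D"
    have D0: "D \<ge> 0" using D_nonneg fD by blast
    have finA': "finite A'" using finA A'sub by (auto intro: finite_subset)
    have vp: "valid_profile N A' (restrict_profile \<sigma> A')"
      unfolding valid_profile_def restrict_profile_def
      using finN Nne finA' part1 dist setA A'sub by auto
    have co: "consistent N A' (restrict_profile \<sigma> A') d"
      unfolding consistent_def
    proof (intro conjI ballI impI)
      show "pseudometric_on (Inl ` N \<union> Inr ` A') d"
        by (rule pm_mono[OF pm]) (use A'sub in blast)
    next
      fix i X Y assume h: "i \<in> N" "X \<in> A'" "Y \<in> A'" "prefers (restrict_profile \<sigma> A') i X Y"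
      hence "prefers \<sigma> i X Y"
        unfolding prefers_pr restrict_profile_def by (auto intro: pr_filter)
      then show "d (Inl i) (Inr X) \<le> d (Inl i) (Inr Y)" using cons h A'sub
        unfolding consistent_def by blast
    qed
    have "SC N d (f N A' (restrict_profile \<sigma> A')) \<le> D * Min (SC N d ` A')"
      using fD vp co unfolding distortion_at_most_def by blast
    also have "\<dots> \<le> D * ((1 + 2 / (1 - \<tau> * real (card A))) * Min (SC N d ` A))"
      using P1 D0 by (rule mult_left_mono)
    finally show "SC N d (f N A' (restrict_profile \<sigma> A'))
           \<le> D * (1 + 2 / (1 - \<tau> * real (card A))) * Min (SC N d ` A)" by (simp add: mult.assoc)
  qed
qed

end
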